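(* Let $G=(V,E)$ be an atomic bispanning graph, $v\in V$ of degree $3$ with neighbours $x,y,z$ and incident edges $e_x,e_y,e_z$, let $(a,b)\in\{(x,y),(x,z),(y,z)\}$, $c$ the remaining neighbour, and $G_{a,b}$ the reduction graph. If $(f,e_{a,b},S,T)$ is an arc of $\vec\tau_3(G_{a,b})$, then there exists $e_2\in\{e_a,e_b\}$ such that (i) $(f,e_2,\rho_{e_{a,b},c}(S,T))$ is an arc of $\vec\tau_3(G)$, and (ii) $(e_2,f,S',T')$ is an arc of $\vec\tau_3(G)$, where $(S',T')\in V_{\tau(G)}$ is the head of the arc in (i).
   Context: Graphs are finite, undirected, possibly with parallel edges, no loops; $X+a=X\cup\{a\}$, $X-a=X\setminus\{a\}$. A spanning tree is $T\subseteq E$ with $(V,T)$ connected and acyclic; bispanning means $E$ is the union of two disjoint spanning trees; atomic means the only bispanning subgraphs are the graph itself and single vertices. For a spanning tree $T$ of a graph $H$ and $e\notin T$, $C_H(T,e)$ is the edge set of the unique cycle in $T+e$; for $e\in T$, $D_H(T,e)$ is the set of edges of $H$ with one end in each component of $(V(H),T-e)$. For disjoint spanning trees $S,T$ covering all edges of $H$: $(e,f)$ with $e\in S,f\in T$ and $D_H(S,e)\cap C_H(T,e)=\{e,f\}$ is a unique $S$ edge exchange; $(e,f)$ with $e\in T,f\in S$ and $D_H(T,e)\cap C_H(S,e)=\{e,f\}$ is a unique $T$ edge exchange. $\vec\tau_3(H)$: vertex set $V_{\tau(H)}$ of ordered pairs $(S,T)$ of disjoint spanning trees covering all edges; an arc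 $(e,f,S,T)$ from $(S,T)$ to $(S-e+f,T+e-f)$ for each unique $S$ edge exchange and to $(S+e-f,T-e+f)$ for each unique $T$ edge exchange; $(e,f,P)$ with $P=(S,T)$ denotes $(e,f,S,T)$. The edge $e_w$ joins $v$ and $w$. The reduction graph $G_{a,b}$ has vertex set $V-v$ and edge set $E-e_x-e_y-e_z+e_{a,b}$, $e_{a,b}$ a new edge with ends $a,b$. $\rho_{e_{a,b},c}(S,T)=(S-e_{a,b}+e_a+e_b,T+e_c)$ if $e_{a,b}\in S$ and $=(S+e_c,T-e_{a,b}+e_a+e_b)$ if $e_{a,b}\in T$. *)

theory Defs
  imports Main
begin

text \<open>A (multi)graph is given by a vertex set V, an edge set E and an incidence
  function ends; parallel edges are allowed, loops are excluded (card (ends e) = 2).\<close>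

definition mgraph :: "'v set \<Rightarrow> 'e set \<Rightarrow> ('e \<Rightarrow> 'v set) \<Rightarrow> bool" where
  "mgraph V E ends \<longleftrightarrow> finite V \<and> finite E \<and> (\<forall>e\<in>E. ends e \<subseteq> V \<and> card (ends e) = 2)"

definition adj_rel :: "('e \<Rightarrow> 'v set) \<Rightarrow> 'e set \<Rightarrow> ('v \<times> 'v) set" where
  "adj_rel ends F = {(p, q). \<exists>e\<in>F. ends e = {p, q}}"

definition connected_on :: "'v set \<Rightarrow> 'e set \<Rightarrow> ('e \<Rightarrow> 'v set) \<Rightarrow> bool" where
  "connected_on V F ends \<longleftrightarrow> V \<noteq> {} \<and> (\<forall>u\<in>V. \<forall>w\<in>V. (u, w) \<in> (adj_rel ends F)\<^sup>*)"

definition is_cycle :: "('e \<Rightarrow> 'v set) \<Rightarrow> 'e set \<Rightarrow> bool" where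
  "is_cycle ends C \<longleftrightarrow> (\<exists>vs es. length vs = length es \<and> es \<noteq> [] \<and> distinct vs \<and> distinct es
      \<and> set es = C \<and> (\<forall>i<length es. ends (es ! i) = {vs ! i, vs ! ((i + 1) mod length vs)}))"

definition acyclic_edges :: "('e \<Rightarrow> 'v set) \<Rightarrow> 'e set \<Rightarrow> bool" where
  "acyclic_edges ends F \<longleftrightarrow> \<not> (\<exists>C \<subseteq> F. is_cycle ends C)"

definition spanning_tree :: "'v set \<Rightarrow> 'e set \<Rightarrow> ('e \<Rightarrow> 'v set) \<Rightarrow> 'e set \<Rightarrow> bool" where
  "spanning_tree V E ends T \<longleftrightarrow> T \<subseteq> E \<and> connected_on V T ends \<and> acyclic_edges ends T"

definition bispanning :: "'v set \<Rightarrow> 'e set \<Rightarrow> ('e \<Rightarrow> 'v set) \<Rightarrow> bool" where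
  "bispanning V E ends \<longleftrightarrow> (\<exists>S T. spanning_tree V E ends S \<and> spanning_tree V E ends T
      \<and> S \<inter> T = {} \<and> S \<union> T = E)"

definition subgraph :: "'v set \<Rightarrow> 'e set \<Rightarrow> 'v set \<Rightarrow> 'e set \<Rightarrow> ('e \<Rightarrow> 'v set) \<Rightarrow> bool" where
  "subgraph V' E' V E ends \<longleftrightarrow> V' \<subseteq> V \<and> E' \<subseteq> E \<and> (\<forall>e\<in>E'. ends e \<subseteq> V')"

definition atomic :: "'v set \<Rightarrow> 'e set \<Rightarrow> ('e \<Rightarrow> 'v set) \<Rightarrow> bool" where
  "atomic V E ends \<longleftrightarrow> (\<forall>V' E'. subgraph V' E' V E ends \<and> bispanning V' E' ends \<longrightarrow>
      (V' = V \<and> E' = E) \<or> (\<exists>u. V' = {u} \<and> E' = {}))"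

text \<open>C_H(T,e): the edge set of the unique cycle in T+e (for e not in T).\<close>
definition fund_cycle :: "('e \<Rightarrow> 'v set) \<Rightarrow> 'e set \<Rightarrow> 'e \<Rightarrow> 'e set" where
  "fund_cycle ends T e = (THE C. C \<subseteq> insert e T \<and> is_cycle ends C)"

text \<open>D_H(T,e): edges of H with one end in each of the two components of (V, T-e),
  i.e. the components containing the two ends of e.\<close>
definition fund_cut :: "'e set \<Rightarrow> ('e \<Rightarrow> 'v set) \<Rightarrow> 'e set \<Rightarrow> 'e \<Rightarrow> 'e set" where
  "fund_cut E ends T e = {f \<in> E. \<exists>u w p q. ends e = {u, w} \<and> ends f = {p, q}
      \<and> (p, u) \<in> (adj_rel ends (T - {e}))\<^sup>* \<and> (q, w) \<in> (adj_rel ends (T - {e}))\<^sup>*}"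

definition tau_vertices :: "'v set \<Rightarrow> 'e set \<Rightarrow> ('e \<Rightarrow> 'v set) \<Rightarrow> ('e set \<times> 'e set) set" where
  "tau_vertices V E ends = {(S, T). spanning_tree V E ends S \<and> spanning_tree V E ends T
      \<and> S \<inter> T = {} \<and> S \<union> T = E}"

definition unique_S_exchange :: "'e set \<Rightarrow> ('e \<Rightarrow> 'v set) \<Rightarrow> 'e set \<Rightarrow> 'e set \<Rightarrow> 'e \<Rightarrow> 'e \<Rightarrow> bool" where
  "unique_S_exchange E ends S T e f \<longleftrightarrow> e \<in> S \<and> f \<in> T \<and> fund_cut E ends S e \<inter> fund_cycle ends T e = {e, f}"

definition unique_T_exchange :: "'e set \<Rightarrow> ('e \<Rightarrow> 'v set) \<Rightarrow> 'e set \<Rightarrow> 'e set \<Rightarrow> 'e \<Rightarrow> 'e \<Rightarrow> bool" where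
  "unique_T_exchange E ends S T e f \<longleftrightarrow> e \<in> T \<and> f \<in> S \<and> fund_cut E ends T e \<inter> fund_cycle ends S e = {e, f}"

definition tau3_arc :: "'v set \<Rightarrow> 'e set \<Rightarrow> ('e \<Rightarrow> 'v set) \<Rightarrow> 'e \<Rightarrow> 'e \<Rightarrow> 'e set \<Rightarrow> 'e set \<Rightarrow> bool" where
  "tau3_arc V E ends e f S T \<longleftrightarrow> (S, T) \<in> tau_vertices V E ends
      \<and> (unique_S_exchange E ends S T e f \<or> unique_T_exchange E ends S T e f)"

definition arc_head :: "'e \<Rightarrow> 'e \<Rightarrow> 'e set \<Rightarrow> 'e set \<Rightarrow> 'e set \<times> 'e set" where
  "arc_head e f S T = (if e \<in> S then (insert f (S - {e}), insert e T - {f})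
                                 else (insert e S - {f}, insert f (T - {e})))"

definition rho :: "'e \<Rightarrow> 'e \<Rightarrow> 'e \<Rightarrow> 'e \<Rightarrow> 'e set \<times> 'e set \<Rightarrow> 'e set \<times> 'e set" where
  "rho eab ea eb ec P = (if eab \<in> fst P then ((fst P - {eab}) \<union> {ea, eb}, insert ec (snd P))
                         else (insert ec (fst P), (snd P - {eab}) \<union> {ea, eb}))"

end

theory Submission
  imports Defs
begin

abbreviation reach :: "('e \<Rightarrow> 'v set) \<Rightarrow> 'e set \<Rightarrow> ('v \<times> 'v) set" where
  "reach ends F \<equiv> (adj_rel ends F)\<^sup>*"

lemma adj_sym: "sym (adj_rel ends F)"
  unfolding adj_rel_def sym_def by (auto simp: insert_commute)

lemma reach_sym: "(p,q) \<in> reach ends F \<Longrightarrow> (q,p) \<in> reach ends F"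
  by (rule symD[OF sym_rtrancl[OF adj_sym]])

lemma reach_trans: "(p,q) \<in> reach ends F \<Longrightarrow> (q,r) \<in> reach ends F \<Longrightarrow> (p,r) \<in> reach ends F"
  by (rule rtrancl_trans)

lemma reach_edge: "g \<in> F \<Longrightarrow> ends g = {p,q} \<Longrightarrow> (p,q) \<in> reach ends F"
  unfolding adj_rel_def by blast

lemma reach_mono: "F \<subseteq> G \<Longrightarrow> (p,q) \<in> reach ends F \<Longrightarrow> (p,q) \<in> reach ends G"
proof -
  assume "F \<subseteq> G"
  then have "adj_rel ends F \<subseteq> adj_rel ends G" unfolding adj_rel_def by blast
  then show "(p,q) \<in> reach ends F \<Longrightarrow> (p,q) \<in> reach ends G" using rtrancl_mono by blast
qed

lemma reach_hom:
  assumes h: "\<forall>g\<in>F1. \<forall>p q. ends1 g = {p,q} \<longrightarrow> (\<pi> p, \<pi> q) \<in> reach ends2 F2"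
    and r: "(p,q) \<in> reach ends1 F1"
  shows "(\<pi> p, \<pi> q) \<in> reach ends2 F2"
  using r
proof (induction rule: rtrancl_induct)
  case base then show ?case by simp
next
  case (step y z)
  then obtain g where "g \<in> F1" "ends1 g = {y,z}" unfolding adj_rel_def by blast
  with h have "(\<pi> y, \<pi> z) \<in> reach ends2 F2" by blast
  with step.IH show ?case by (rule rtrancl_trans)
qed

lemma reach_isolated:
  assumes "\<forall>g\<in>F. v \<notin> ends g" and "(v,q) \<in> reach ends F"
  shows "q = v"
  using assms(2)
proof (induction rule: rtrancl_induct)
  case base then show ?case by simp
next
  case (step y z)
  then obtain g where "g \<in> F" "ends g = {y,z}" unfolding adj_rel_def by blast
  with step assms(1) show ?case by auto
qed

lemma reach_add1:
  assumes "(r,s) \<in> reach ends (insert f F)" and ef: "ends f = {p,q}"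
  shows "(r,s) \<in> reach ends F \<or> ((r,p) \<in> reach ends F \<and> (q,s) \<in> reach ends F)
         \<or> ((r,q) \<in> reach ends F \<and> (p,s) \<in> reach ends F)"
  using assms(1)
proof (induction rule: rtrancl_induct)
  case base then show ?case by simp
next
  case (step y z)
  then obtain g where g: "g \<in> insert f F" "ends g = {y,z}" unfolding adj_rel_def by blast
  show ?case
  proof (cases "g \<in> F")
    case True
    then have "(y,z) \<in> reach ends F" using g reach_edge by metis
    with step.IH show ?thesis by (meson rtrancl_trans)
  next
    case False
    then have "g = f" using g by blast
    then have yz: "{y,z} = {p,q}" using g ef by simp
    then have "(y = p \<and> z = q) \<or> (y = q \<and> z = p)" by (auto simp: doubleton_eq_iff)
    with step.IH show ?thesis by blast
  qed
qed

lemma reach_split: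
  assumes "(u,x) \<in> reach ends F" "e \<in> F" "ends e = {u,w}"
  shows "(u,x) \<in> reach ends (F - {e}) \<or> (w,x) \<in> reach ends (F - {e})"
proof -
  have "insert e (F - {e}) = F" using assms by blast
  then have "(u,x) \<in> reach ends (insert e (F - {e}))" using assms by simp
  from reach_add1[OF this assms(3)] show ?thesis by blast
qed

definition is_path :: "('e \<Rightarrow> 'v set) \<Rightarrow> 'e set \<Rightarrow> 'v list \<Rightarrow> 'e list \<Rightarrow> bool" where
  "is_path ends F vs es \<longleftrightarrow> length vs = Suc (length es) \<and> distinct vs \<and> set es \<subseteq> F
     \<and> (\<forall>i<length es. ends (es ! i) = {vs ! i, vs ! Suc i})"

lemma path_exists:
  assumes "(p,q) \<in> reach ends F"
  shows "\<exists>vs es. is_path ends F vs es \<and> hd vs = p \<and> last vs = q"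
  using assms
proof (induction rule: rtrancl_induct)
  case base
  show ?case by (rule exI[of _ "[p]"], rule exI[of _ "[]"]) (simp add: is_path_def)
next
  case (step t t')
  then obtain h where h: "h \<in> F" "ends h = {t,t'}" unfolding adj_rel_def by blast
  from step.IH obtain vs es where P: "is_path ends F vs es" "hd vs = p" "last vs = t" by blast
  have lv: "length vs = Suc (length es)" and dv: "distinct vs" and se: "set es \<subseteq> F"
    and ed: "\<forall>i<length es. ends (es ! i) = {vs ! i, vs ! Suc i}" using P(1) unfolding is_path_def by auto
  have ne: "vs \<noteq> []" using lv by auto
  show ?case
  proof (cases "t' \<in> set vs")
    case True
    then obtain j where j: "j < length vs" "vs ! j = t'" by (metis in_set_conv_nth)
    have "is_path ends F (take (Suc j) vs) (take j es)"
      unfolding is_path_def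
    proof (intro conjI)
      show "length (take (Suc j) vs) = Suc (length (take j es))" using j lv by simp
      show "distinct (take (Suc j) vs)" using dv by simp
      show "set (take j es) \<subseteq> F" using se by (meson order_trans set_take_subset)
      show "\<forall>i<length (take j es). ends (take j es ! i) = {take (Suc j) vs ! i, take (Suc j) vs ! Suc i}"
        using ed j lv by simp
    qed
    moreover have "hd (take (Suc j) vs) = p" using ne P(2) by (simp add: hd_take)
    moreover have "last (take (Suc j) vs) = t'" using j by (simp add: take_Suc_conv_app_nth)
    ultimately show ?thesis by blast
  next
    case False
    have "is_path ends F (vs @ [t']) (es @ [h])"
      unfolding is_path_def
    proof (intro conjI)
      show "length (vs @ [t']) = Suc (length (es @ [h]))" using lv by simp
      show "distinct (vs @ [t'])" using dv False by simp
      show "set (es @ [h]) \<subseteq> F" using se h by simp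
      show "\<forall>i<length (es @ [h]). ends ((es @ [h]) ! i) = {(vs @ [t']) ! i, (vs @ [t']) ! Suc i}"
      proof (intro allI impI)
        fix i assume i: "i < length (es @ [h])"
        show "ends ((es @ [h]) ! i) = {(vs @ [t']) ! i, (vs @ [t']) ! Suc i}"
        proof (cases "i < length es")
          case True then show ?thesis using ed lv by (simp add: nth_append)
        next
          case False
          then have ii: "i = length es" using i by simp
          have "vs ! length es = t" using P(3) lv ne by (simp add: last_conv_nth)
          then show ?thesis using ii lv h by (simp add: nth_append)
        qed
      qed
    qed
    moreover have "hd (vs @ [t']) = p" using ne P(2) by simp
    moreover have "last (vs @ [t']) = t'" by simp
    ultimately show ?thesis by blast
  qed
qed

lemma path_distinct_edges:
  assumes "is_path ends F vs es" shows "distinct es"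
proof -
  have lv: "length vs = Suc (length es)" and dv: "distinct vs"
    and ed: "\<forall>i<length es. ends (es ! i) = {vs ! i, vs ! Suc i}" using assms unfolding is_path_def by auto
  show ?thesis
  proof (subst distinct_conv_nth, intro allI impI)
    fix i j assume ij: "i < length es" "j < length es" "i \<noteq> j"
    show "es ! i \<noteq> es ! j"
    proof
      assume eq: "es ! i = es ! j"
      then have "{vs ! i, vs ! Suc i} = {vs ! j, vs ! Suc j}" using ed ij by metis
      then have "vs ! i = vs ! j \<or> vs ! i = vs ! Suc j" by blast
      moreover have "vs ! Suc i = vs ! j \<or> vs ! Suc i = vs ! Suc j"
        using \<open>{vs ! i, vs ! Suc i} = {vs ! j, vs ! Suc j}\<close> by blast
      ultimately show False using dv ij lv by (auto simp: nth_eq_iff_index_eq)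
    qed
  qed
qed

lemma path_cycle:
  assumes "is_path ends F vs es" "hd vs = p" "last vs = q" "g \<notin> F" "ends g = {q,p}"
  shows "is_cycle ends (insert g (set es))"
proof -
  have lv: "length vs = Suc (length es)" and dv: "distinct vs" and se: "set es \<subseteq> F"
    and ed: "\<forall>i<length es. ends (es ! i) = {vs ! i, vs ! Suc i}" using assms(1) unfolding is_path_def by auto
  have de: "distinct es" using path_distinct_edges[OF assms(1)] .
  have ne: "vs \<noteq> []" using lv by auto
  have gn: "g \<notin> set es" using se assms(4) by blast
  show ?thesis unfolding is_cycle_def
  proof (rule exI[of _ vs], rule exI[of _ "es @ [g]"], intro conjI)
    show "length vs = length (es @ [g])" using lv by simp
    show "es @ [g] \<noteq> []" by simp
    show "distinct vs" by fact
    show "distinct (es @ [g])" using de gn by simp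
    show "set (es @ [g]) = insert g (set es)" by simp
    show "\<forall>i<length (es @ [g]). ends ((es @ [g]) ! i) = {vs ! i, vs ! ((i + 1) mod length vs)}"
    proof (intro allI impI)
      fix i assume i: "i < length (es @ [g])"
      show "ends ((es @ [g]) ! i) = {vs ! i, vs ! ((i + 1) mod length vs)}"
      proof (cases "i < length es")
        case True then show ?thesis using ed lv by (simp add: nth_append)
      next
        case False
        then have ii: "i = length es" using i by simp
        have "vs ! length es = q" using assms(3) lv ne by (simp add: last_conv_nth)
        moreover have "vs ! 0 = p" using assms(2) ne by (simp add: hd_conv_nth)
        ultimately show ?thesis using ii lv assms(5) by (simp add: nth_append insert_commute)
      qed
    qed
  qed
qed

lemma cycle_conn:
  assumes cyc: "is_cycle ends C" and gC: "g \<in> C" and eg: "ends g = {r,s}"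
  shows "(r,s) \<in> reach ends (C - {g})"
proof -
  obtain vs es where L: "length vs = length es" "es \<noteq> []" "distinct vs" "distinct es" "set es = C"
    "\<forall>i<length es. ends (es ! i) = {vs ! i, vs ! ((i + 1) mod length vs)}"
    using cyc unfolding is_cycle_def by blast
  define n where "n = length es"
  have n0: "0 < n" using L(2) n_def by simp
  have ed: "\<forall>i<n. ends (es ! i) = {vs ! i, vs ! ((i + 1) mod n)}" using L(6) L(1) n_def by simp
  obtain i where i: "i < n" "es ! i = g" using gC L(5) n_def by (metis in_set_conv_nth)
  have main: "j < n \<Longrightarrow> (vs ! ((i+1) mod n), vs ! ((i+1+j) mod n)) \<in> reach ends (C - {g})" for j
  proof (induction j)
    case 0 show ?case by simp
  next
    case (Suc j)
    then have IH: "(vs ! ((i+1) mod n), vs ! ((i+1+j) mod n)) \<in> reach ends (C - {g})" by simp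
    define k where "k = (i+1+j) mod n"
    have kn: "k < n" using n0 k_def by simp
    have mif: "(i+1+j) mod n = (if i+1+j < n then i+1+j else i+1+j-n)"
      using i Suc.prems by (auto simp: mod_if)
    have ki: "k \<noteq> i" using mif k_def Suc.prems i by (auto split: if_splits)
    have "es ! k \<in> C - {g}" using kn ki i L(4) L(5) n_def by (auto simp: nth_eq_iff_index_eq)
    moreover have "ends (es ! k) = {vs ! k, vs ! ((i+1+Suc j) mod n)}"
      using ed kn k_def by (simp add: mod_Suc_eq)
    ultimately have "(vs ! k, vs ! ((i+1+Suc j) mod n)) \<in> reach ends (C - {g})"
      using reach_edge by metis
    with IH k_def show ?case by (meson rtrancl_trans)
  qed
  have "n - 1 < n" using n0 by simp
  from main[OF this] have "(vs ! ((i+1) mod n), vs ! i) \<in> reach ends (C - {g})"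
    using n0 i by (simp add: add.commute)
  moreover have "{r,s} = {vs ! i, vs ! ((i + 1) mod n)}" using ed i eg by metis
  ultimately show ?thesis
    by (metis doubleton_eq_iff reach_sym)
qed

definition acyc :: "('e \<Rightarrow> 'v set) \<Rightarrow> 'e set \<Rightarrow> bool" where
  "acyc ends F \<longleftrightarrow> (\<forall>g\<in>F. \<forall>p q. ends g = {p,q} \<longrightarrow> (p,q) \<notin> reach ends (F - {g}))"

lemma acycD: "acyc ends F \<Longrightarrow> g \<in> F \<Longrightarrow> ends g = {p,q} \<Longrightarrow> (p,q) \<notin> reach ends (F - {g})"
  unfolding acyc_def by blast

lemma acyc_iff:
  assumes cd: "\<forall>g\<in>F. card (ends g) = 2"
  shows "acyclic_edges ends F \<longleftrightarrow> acyc ends F"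
proof
  assume ac: "acyclic_edges ends F"
  show "acyc ends F" unfolding acyc_def
  proof (intro ballI allI impI notI)
    fix g p q assume g: "g \<in> F" "ends g = {p,q}" "(p,q) \<in> reach ends (F - {g})"
    obtain vs es where P: "is_path ends (F - {g}) vs es" "hd vs = p" "last vs = q"
      using path_exists[OF g(3)] by blast
    have gn: "g \<notin> F - {g}" by simp
    have eg: "ends g = {q,p}" using g(2) by (simp add: insert_commute)
    have cyc: "is_cycle ends (insert g (set es))"
      by (rule path_cycle[OF P(1) P(2) P(3) gn eg])
    have "set es \<subseteq> F - {g}" using P(1) unfolding is_path_def by (elim conjE)
    then have sub: "insert g (set es) \<subseteq> F" using g(1) by blast
    have "\<not> (\<exists>C\<subseteq>F. is_cycle ends C)" using ac unfolding acyclic_edges_def .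
    then show False using sub cyc by blast
  qed
next
  assume ac: "acyc ends F"
  show "acyclic_edges ends F" unfolding acyclic_edges_def
  proof
    assume "\<exists>C\<subseteq>F. is_cycle ends C"
    then obtain C where C: "C \<subseteq> F" "is_cycle ends C" by blast
    then obtain vs es where "es \<noteq> []" "set es = C" unfolding is_cycle_def by blast
    then have "C \<noteq> {}" by auto
    then obtain g where gC: "g \<in> C" by blast
    then have "card (ends g) = 2" using cd C by blast
    then obtain r s where rs: "ends g = {r,s}" by (meson card_2_iff)
    have "(r,s) \<in> reach ends (C - {g})" using cycle_conn[OF C(2) gC rs] .
    moreover have "C - {g} \<subseteq> F - {g}" using C by blast
    ultimately have "(r,s) \<in> reach ends (F - {g})" by (metis reach_mono)
    moreover have "g \<in> F" using gC C by blast
    ultimately show False using acycD[OF ac _ rs] by blast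
  qed
qed

lemma tree_acyc:
  assumes "spanning_tree V E ends T" "\<forall>g\<in>E. ends g \<subseteq> V \<and> card (ends g) = 2"
  shows "acyc ends T"
proof -
  have "T \<subseteq> E" using assms unfolding spanning_tree_def by blast
  then show ?thesis using assms acyc_iff[of T ends] unfolding spanning_tree_def by blast
qed

lemma tree_reach:
  assumes "spanning_tree V E ends T" "p \<in> V" "q \<in> V"
  shows "(p,q) \<in> reach ends T"
  using assms unfolding spanning_tree_def connected_on_def by blast

lemma tree_cycle_char:
  assumes T: "spanning_tree V E ends T" and mg: "\<forall>g\<in>E. ends g \<subseteq> V \<and> card (ends g) = 2"
    and ee: "ends e = {u,w}" and uV: "u \<in> V" and wV: "w \<in> V" and eT: "e \<notin> T"
  shows "fund_cycle ends T e = insert e {g\<in>T. (u,w) \<notin> reach ends (T - {g})}"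
proof -
  define X where "X = insert e {g\<in>T. (u,w) \<notin> reach ends (T - {g})}"
  have TE: "T \<subseteq> E" using T unfolding spanning_tree_def by blast
  have ac: "acyc ends T" using tree_acyc[OF T mg] .
  have acT: "acyclic_edges ends T" using T unfolding spanning_tree_def by blast
  have uniq: "C = X" if C: "C \<subseteq> insert e T" "is_cycle ends C" for C
  proof
    have eC: "e \<in> C"
    proof (rule ccontr)
      assume "e \<notin> C"
      then have "C \<subseteq> T" using C by blast
      moreover have "\<not> (\<exists>C\<subseteq>T. is_cycle ends C)" using acT unfolding acyclic_edges_def .
      ultimately show False using C(2) by blast
    qed
    show "C \<subseteq> X"
    proof
      fix g assume gC: "g \<in> C"
      show "g \<in> X"
      proof (cases "g = e")
        case True then show ?thesis unfolding X_def by simp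
      next
        case False
        then have gT: "g \<in> T" using C gC by blast
        then have "g \<in> E" using TE by blast
        then have "card (ends g) = 2" using mg by blast
        then obtain r s where rs: "ends g = {r,s}" by (meson card_2_iff)
        have "(u,w) \<notin> reach ends (T - {g})"
        proof
          assume uw: "(u,w) \<in> reach ends (T - {g})"
          have "(id r, id s) \<in> reach ends (T - {g})"
          proof (rule reach_hom[OF _ cycle_conn[OF C(2) gC rs]])
            show "\<forall>h\<in>C - {g}. \<forall>p q. ends h = {p, q} \<longrightarrow> (id p, id q) \<in> reach ends (T - {g})"
            proof (intro ballI allI impI)
              fix h p q assume h: "h \<in> C - {g}" "ends h = {p,q}"
              show "(id p, id q) \<in> reach ends (T - {g})"
              proof (cases "h = e")
                case True
                then have "(p = u \<and> q = w) \<or> (p = w \<and> q = u)" using h ee by (auto simp: doubleton_eq_iff)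
                moreover have "(w,u) \<in> reach ends (T - {g})" using reach_sym[OF uw] .
                ultimately show ?thesis using uw by auto
              next
                case False
                then have hT: "h \<in> T - {g}" using h C by blast
                show ?thesis using reach_edge[where ends=ends, OF hT h(2)] by simp
              qed
            qed
          qed
          then show False using acycD[OF ac gT rs] by simp
        qed
        then show ?thesis using gT unfolding X_def by blast
      qed
    qed
    show "X \<subseteq> C"
    proof
      fix g assume gX: "g \<in> X"
      show "g \<in> C"
      proof (cases "g = e")
        case True then show ?thesis using eC by simp
      next
        case False
        then have gT: "g \<in> T" and nr: "(u,w) \<notin> reach ends (T - {g})" using gX unfolding X_def by auto
        show ?thesis
        proof (rule ccontr)
          assume "g \<notin> C"
          then have sub: "C - {e} \<subseteq> T - {g}" using C by blast
          have "(u,w) \<in> reach ends (T - {g})"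
            by (rule reach_mono[OF sub cycle_conn[OF C(2) eC ee]])
          then show False using nr by simp
        qed
      qed
    qed
  qed
  have r0: "(u,w) \<in> reach ends T" using tree_reach[OF T uV wV] .
  obtain vs es where P: "is_path ends T vs es" "hd vs = u" "last vs = w"
    using path_exists[OF r0] by blast
  have ee': "ends e = {w,u}" using ee by (simp add: insert_commute)
  have cyc: "is_cycle ends (insert e (set es))"
    by (rule path_cycle[OF P(1) P(2) P(3) eT ee'])
  have "set es \<subseteq> T" using P(1) unfolding is_path_def by (elim conjE)
  then have sub: "insert e (set es) \<subseteq> insert e T" by blast
  have "insert e (set es) = X" using uniq[OF sub cyc] .
  then have PX: "X \<subseteq> insert e T \<and> is_cycle ends X" using cyc sub by simp
  have "fund_cycle ends T e = X" unfolding fund_cycle_def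
  proof (rule the_equality)
    show "X \<subseteq> insert e T \<and> is_cycle ends X" by (rule PX)
  next
    fix C assume "C \<subseteq> insert e T \<and> is_cycle ends C"
    then show "C = X" using uniq by (elim conjE)
  qed
  then show ?thesis unfolding X_def .
qed

lemma acyc_tree:
  assumes "F \<subseteq> E" "\<forall>g\<in>E. ends g \<subseteq> V \<and> card (ends g) = 2" "acyc ends F"
    "V \<noteq> {}" "\<forall>x\<in>V. \<forall>y\<in>V. (x,y) \<in> reach ends F"
  shows "spanning_tree V E ends F"
proof -
  have "\<forall>g\<in>F. card (ends g) = 2" using assms(1,2) by blast
  then have "acyclic_edges ends F" using acyc_iff assms(3) by blast
  then show ?thesis using assms unfolding spanning_tree_def connected_on_def by blast
qed

lemma conn_via:
  assumes "\<And>x. x \<in> V \<Longrightarrow> (x,u) \<in> reach ends F"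
  shows "\<forall>x\<in>V. \<forall>y\<in>V. (x,y) \<in> reach ends F"
proof (intro ballI)
  fix x y assume "x \<in> V" "y \<in> V"
  show "(x,y) \<in> reach ends F" using rtrancl_trans[OF assms[OF \<open>x \<in> V\<close>] reach_sym[OF assms[OF \<open>y \<in> V\<close>]]] .
qed

lemma exch_S:
  assumes S: "spanning_tree V E ends S" and mg: "\<forall>g\<in>E. ends g \<subseteq> V \<and> card (ends g) = 2"
    and eS: "e \<in> S" and fE: "f \<in> E" and fS: "f \<notin> S" and fD: "f \<in> fund_cut E ends S e"
  shows "spanning_tree V E ends (insert f (S - {e}))"
proof -
  obtain u w p q where D: "ends e = {u,w}" "ends f = {p,q}" "(p,u) \<in> reach ends (S - {e})"
    "(q,w) \<in> reach ends (S - {e})" using fD unfolding fund_cut_def by blast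
  have SE: "S \<subseteq> E" using S unfolding spanning_tree_def by blast
  have ac: "acyc ends S" using tree_acyc[OF S mg] .
  have eE: "e \<in> E" using SE eS by blast
  have uV: "u \<in> V" using D(1) mg eE by blast
  have Vne: "V \<noteq> {}" using uV by blast
  define S' where "S' = insert f (S - {e})"
  have subS: "S - {e} \<subseteq> S'" using S'_def by blast
  have m1: "(x,y) \<in> reach ends (S - {e}) \<Longrightarrow> (x,y) \<in> reach ends S'" for x y
    by (rule reach_mono[OF subS])
  have fS': "f \<in> S'" using S'_def by blast
  have pq: "(p,q) \<in> reach ends S'" by (rule reach_edge[where ends=ends, OF fS' D(2)])
  have uw: "(u,w) \<in> reach ends S'"
    using rtrancl_trans[OF rtrancl_trans[OF m1[OF reach_sym[OF D(3)]] pq] m1[OF D(4)]] .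
  have toU: "(x,u) \<in> reach ends S'" if "x \<in> V" for x
  proof -
    have "(u,x) \<in> reach ends S" using tree_reach[OF S uV that] .
    from reach_split[OF this eS D(1)] show ?thesis
    proof
      assume "(u,x) \<in> reach ends (S - {e})"
      then show ?thesis using reach_sym[OF m1] by blast
    next
      assume "(w,x) \<in> reach ends (S - {e})"
      then show ?thesis using rtrancl_trans[OF reach_sym[OF m1] reach_sym[OF uw]] by blast
    qed
  qed
  have conn: "\<forall>x\<in>V. \<forall>y\<in>V. (x,y) \<in> reach ends S'" by (rule conn_via[OF toU])
  have nuw: "(u,w) \<notin> reach ends (S - {e})" using acycD[OF ac eS D(1)] .
  have acS': "acyc ends S'" unfolding acyc_def
  proof (intro ballI allI impI notI)
    fix g r s assume g: "g \<in> S'" "ends g = {r,s}" "(r,s) \<in> reach ends (S' - {g})"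
    show False
    proof (cases "g = f")
      case True
      then have "S' - {g} = S - {e}" using S'_def fS by auto
      then have rs: "(r,s) \<in> reach ends (S - {e})" using g by simp
      have "(r = p \<and> s = q) \<or> (r = q \<and> s = p)" using g(2) D(2) True by (auto simp: doubleton_eq_iff)
      then have pq0: "(p,q) \<in> reach ends (S - {e})" using rs reach_sym[OF rs] by auto
      have "(u,w) \<in> reach ends (S - {e})"
        using rtrancl_trans[OF rtrancl_trans[OF reach_sym[OF D(3)] pq0] D(4)] .
      then show False using nuw by simp
    next
      case False
      then have gS: "g \<in> S - {e}" using g S'_def by blast
      have eq: "S' - {g} = insert f (S - {e} - {g})" using S'_def False by auto
      have sub1: "S - {e} - {g} \<subseteq> S - {g}" and sub2: "S - {e} - {g} \<subseteq> S - {e}" by auto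
      have r3: "(r,s) \<in> reach ends (insert f (S - {e} - {g}))" using g(3) eq by simp
      have gS0: "g \<in> S" using gS by blast
      have rsS: "(r,s) \<in> reach ends (S - {e})" by (rule reach_edge[where ends=ends, OF gS g(2)])
      from reach_add1[OF r3 D(2)] show False
      proof (elim disjE conjE)
        assume "(r,s) \<in> reach ends (S - {e} - {g})"
        then have "(r,s) \<in> reach ends (S - {g})" by (rule reach_mono[OF sub1])
        then show False using acycD[OF ac gS0 g(2)] by simp
      next
        assume a1: "(r,p) \<in> reach ends (S - {e} - {g})" and a2: "(q,s) \<in> reach ends (S - {e} - {g})"
        have b1: "(r,p) \<in> reach ends (S - {e})" by (rule reach_mono[OF sub2 a1])
        have b2: "(q,s) \<in> reach ends (S - {e})" by (rule reach_mono[OF sub2 a2])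
        have "(u,w) \<in> reach ends (S - {e})"
          using rtrancl_trans[OF rtrancl_trans[OF rtrancl_trans[OF reach_sym[OF b1] rsS] reach_sym[OF b2]] D(4)]
                rtrancl_trans[OF reach_sym[OF D(3)]] by blast
        then show False using nuw by simp
      next
        assume a1: "(r,q) \<in> reach ends (S - {e} - {g})" and a2: "(p,s) \<in> reach ends (S - {e} - {g})"
        have b1: "(r,q) \<in> reach ends (S - {e})" by (rule reach_mono[OF sub2 a1])
        have b2: "(p,s) \<in> reach ends (S - {e})" by (rule reach_mono[OF sub2 a2])
        have c1: "(u,s) \<in> reach ends (S - {e})" using rtrancl_trans[OF reach_sym[OF D(3)] b2] .
        have c2: "(s,w) \<in> reach ends (S - {e})"
          using rtrancl_trans[OF rtrancl_trans[OF reach_sym[OF rsS] b1] D(4)] .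
        have "(u,w) \<in> reach ends (S - {e})" using rtrancl_trans[OF c1 c2] .
        then show False using nuw by simp
      qed
    qed
  qed
  have "S' \<subseteq> E" using SE fE S'_def by blast
  then show ?thesis using acyc_tree[OF _ mg acS' Vne conn] S'_def by blast
qed

lemma exch_T:
  assumes T: "spanning_tree V E ends T" and mg: "\<forall>g\<in>E. ends g \<subseteq> V \<and> card (ends g) = 2"
    and eE: "e \<in> E" and eT: "e \<notin> T" and fT: "f \<in> T" and ee: "ends e = {u,w}"
    and nr: "(u,w) \<notin> reach ends (T - {f})"
  shows "spanning_tree V E ends (insert e (T - {f}))"
proof -
  have TE: "T \<subseteq> E" using T unfolding spanning_tree_def by blast
  have ac: "acyc ends T" using tree_acyc[OF T mg] .
  have uV: "u \<in> V" and wV: "w \<in> V" using mg eE ee by auto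
  have Vne: "V \<noteq> {}" using uV by blast
  have fE: "f \<in> E" using fT TE by blast
  then have "card (ends f) = 2" using mg by blast
  then obtain p q where pq: "ends f = {p,q}" by (meson card_2_iff)
  have pV: "p \<in> V" using mg fE pq by blast
  define T' where "T' = insert e (T - {f})"
  have subT: "T - {f} \<subseteq> T'" using T'_def by blast
  have m1: "(x,y) \<in> reach ends (T - {f}) \<Longrightarrow> (x,y) \<in> reach ends T'" for x y
    by (rule reach_mono[OF subT])
  have eT': "e \<in> T'" using T'_def by blast
  have uwT': "(u,w) \<in> reach ends T'" by (rule reach_edge[where ends=ends, OF eT' ee])
  have "insert f (T - {f}) = T" using fT by blast
  then have r0: "(u,w) \<in> reach ends (insert f (T - {f}))" using tree_reach[OF T uV wV] by simp
  have pqT': "(p,q) \<in> reach ends T'"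
    using reach_add1[OF r0 pq]
  proof (elim disjE conjE)
    assume "(u,w) \<in> reach ends (T - {f})" then show ?thesis using nr by simp
  next
    assume a1: "(u,p) \<in> reach ends (T - {f})" and a2: "(q,w) \<in> reach ends (T - {f})"
    show ?thesis using rtrancl_trans[OF rtrancl_trans[OF reach_sym[OF m1[OF a1]] uwT'] reach_sym[OF m1[OF a2]]] .
  next
    assume a1: "(u,q) \<in> reach ends (T - {f})" and a2: "(p,w) \<in> reach ends (T - {f})"
    have "(q,p) \<in> reach ends T'"
      using rtrancl_trans[OF rtrancl_trans[OF reach_sym[OF m1[OF a1]] uwT'] reach_sym[OF m1[OF a2]]] .
    then show ?thesis by (rule reach_sym)
  qed
  have toP: "(x,p) \<in> reach ends T'" if "x \<in> V" for x
  proof -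
    have "(p,x) \<in> reach ends T" using tree_reach[OF T pV that] .
    from reach_split[OF this fT pq] show ?thesis
    proof
      assume "(p,x) \<in> reach ends (T - {f})"
      then show ?thesis using reach_sym[OF m1] by blast
    next
      assume "(q,x) \<in> reach ends (T - {f})"
      then show ?thesis using rtrancl_trans[OF reach_sym[OF m1] reach_sym[OF pqT']] by blast
    qed
  qed
  have conn: "\<forall>x\<in>V. \<forall>y\<in>V. (x,y) \<in> reach ends T'" by (rule conn_via[OF toP])
  have acT': "acyc ends T'" unfolding acyc_def
  proof (intro ballI allI impI notI)
    fix g r s assume g: "g \<in> T'" "ends g = {r,s}" "(r,s) \<in> reach ends (T' - {g})"
    show False
    proof (cases "g = e")
      case True
      then have "T' - {g} = T - {f}" using T'_def eT fT by auto
      then have rs: "(r,s) \<in> reach ends (T - {f})" using g by simp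
      have "(r = u \<and> s = w) \<or> (r = w \<and> s = u)" using g(2) ee True by (auto simp: doubleton_eq_iff)
      then have "(u,w) \<in> reach ends (T - {f})" using rs reach_sym[OF rs] by auto
      then show False using nr by simp
    next
      case False
      then have gT: "g \<in> T - {f}" using g T'_def by blast
      have gT0: "g \<in> T" using gT by blast
      have eq: "T' - {g} = insert e (T - {f} - {g})" using T'_def False by auto
      have sub1: "T - {f} - {g} \<subseteq> T - {g}" and sub2: "T - {f} - {g} \<subseteq> T - {f}" by auto
      have rsT: "(r,s) \<in> reach ends (T - {f})" by (rule reach_edge[where ends=ends, OF gT g(2)])
      have r3: "(r,s) \<in> reach ends (insert e (T - {f} - {g}))" using g(3) eq by simp
      from reach_add1[OF r3 ee] show False
      proof (elim disjE conjE)
        assume "(r,s) \<in> reach ends (T - {f} - {g})"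
        then have "(r,s) \<in> reach ends (T - {g})" by (rule reach_mono[OF sub1])
        then show False using acycD[OF ac gT0 g(2)] by simp
      next
        assume a1: "(r,u) \<in> reach ends (T - {f} - {g})" and a2: "(w,s) \<in> reach ends (T - {f} - {g})"
        have b1: "(r,u) \<in> reach ends (T - {f})" by (rule reach_mono[OF sub2 a1])
        have b2: "(w,s) \<in> reach ends (T - {f})" by (rule reach_mono[OF sub2 a2])
        have "(u,w) \<in> reach ends (T - {f})"
          using rtrancl_trans[OF rtrancl_trans[OF reach_sym[OF b1] rsT] reach_sym[OF b2]] .
        then show False using nr by simp
      next
        assume a1: "(r,w) \<in> reach ends (T - {f} - {g})" and a2: "(u,s) \<in> reach ends (T - {f} - {g})"
        have b1: "(r,w) \<in> reach ends (T - {f})" by (rule reach_mono[OF sub2 a1])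
        have b2: "(u,s) \<in> reach ends (T - {f})" by (rule reach_mono[OF sub2 a2])
        have "(u,w) \<in> reach ends (T - {f})"
          using rtrancl_trans[OF rtrancl_trans[OF b2 reach_sym[OF rsT]] b1] .
        then show False using nr by simp
      qed
    qed
  qed
  have "T' \<subseteq> E" using TE eE T'_def by blast
  then show ?thesis using acyc_tree[OF _ mg acT' Vne conn] T'_def by blast
qed

lemma cut_swap:
  assumes fD: "f \<in> fund_cut E ends S e" and eq: "S' - {f} = S - {e}"
  shows "fund_cut E ends S' f = fund_cut E ends S e"
proof -
  obtain u0 w0 p0 q0 where D: "ends e = {u0,w0}" "ends f = {p0,q0}" "(p0,u0) \<in> reach ends (S - {e})"
    "(q0,w0) \<in> reach ends (S - {e})" using fD unfolding fund_cut_def by blast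
  let ?R = "reach ends (S - {e})"
  have A: "(\<exists>u w. ends f = {u,w} \<and> (p,u) \<in> ?R \<and> (q,w) \<in> ?R) \<longleftrightarrow>
           (\<exists>u w. ends e = {u,w} \<and> (p,u) \<in> ?R \<and> (q,w) \<in> ?R)" for p q
  proof
    assume "\<exists>u w. ends f = {u,w} \<and> (p,u) \<in> ?R \<and> (q,w) \<in> ?R"
    then obtain u w where uw: "ends f = {u,w}" "(p,u) \<in> ?R" "(q,w) \<in> ?R" by blast
    then have "(u = p0 \<and> w = q0) \<or> (u = q0 \<and> w = p0)" using D(2) by (auto simp: doubleton_eq_iff)
    then show "\<exists>u w. ends e = {u,w} \<and> (p,u) \<in> ?R \<and> (q,w) \<in> ?R"
    proof
      assume h: "u = p0 \<and> w = q0"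
      then have a: "(p,p0) \<in> ?R" "(q,q0) \<in> ?R" using uw by auto
      have "(p,u0) \<in> ?R" "(q,w0) \<in> ?R"
        using rtrancl_trans[OF a(1) D(3)] rtrancl_trans[OF a(2) D(4)] by auto
      then show ?thesis using D(1) by blast
    next
      assume h: "u = q0 \<and> w = p0"
      then have a: "(p,q0) \<in> ?R" "(q,p0) \<in> ?R" using uw by auto
      have "(p,w0) \<in> ?R" "(q,u0) \<in> ?R"
        using rtrancl_trans[OF a(1) D(4)] rtrancl_trans[OF a(2) D(3)] by auto
      moreover have "ends e = {w0,u0}" using D(1) by (simp add: insert_commute)
      ultimately show ?thesis by blast
    qed
  next
    assume "\<exists>u w. ends e = {u,w} \<and> (p,u) \<in> ?R \<and> (q,w) \<in> ?R"
    then obtain u w where uw: "ends e = {u,w}" "(p,u) \<in> ?R" "(q,w) \<in> ?R" by blast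
    then have "(u = u0 \<and> w = w0) \<or> (u = w0 \<and> w = u0)" using D(1) by (auto simp: doubleton_eq_iff)
    then show "\<exists>u w. ends f = {u,w} \<and> (p,u) \<in> ?R \<and> (q,w) \<in> ?R"
    proof
      assume h: "u = u0 \<and> w = w0"
      then have a: "(p,u0) \<in> ?R" "(q,w0) \<in> ?R" using uw by auto
      have "(p,p0) \<in> ?R" "(q,q0) \<in> ?R"
        using rtrancl_trans[OF a(1) reach_sym[OF D(3)]] rtrancl_trans[OF a(2) reach_sym[OF D(4)]] by auto
      then show ?thesis using D(2) by blast
    next
      assume h: "u = w0 \<and> w = u0"
      then have a: "(p,w0) \<in> ?R" "(q,u0) \<in> ?R" using uw by auto
      have "(p,q0) \<in> ?R" "(q,p0) \<in> ?R"
        using rtrancl_trans[OF a(1) reach_sym[OF D(4)]] rtrancl_trans[OF a(2) reach_sym[OF D(3)]] by auto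
      moreover have "ends f = {q0,p0}" using D(2) by (simp add: insert_commute)
      ultimately show ?thesis by blast
    qed
  qed
  have "fund_cut E ends S' f = {h \<in> E. \<exists>p q. ends h = {p,q} \<and> (\<exists>u w. ends f = {u,w} \<and> (p,u) \<in> ?R \<and> (q,w) \<in> ?R)}"
    unfolding fund_cut_def eq by blast
  also have "\<dots> = {h \<in> E. \<exists>p q. ends h = {p,q} \<and> (\<exists>u w. ends e = {u,w} \<and> (p,u) \<in> ?R \<and> (q,w) \<in> ?R)}"
    using A by simp
  also have "\<dots> = fund_cut E ends S e" unfolding fund_cut_def by blast
  finally show ?thesis .
qed

lemma rev_S:
  assumes mg: "\<forall>g\<in>E. ends g \<subseteq> V \<and> card (ends g) = 2"
    and P: "(S,T) \<in> tau_vertices V E ends" and X: "unique_S_exchange E ends S T e f"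
  shows "(insert f (S - {e}), insert e T - {f}) \<in> tau_vertices V E ends
       \<and> unique_S_exchange E ends (insert f (S - {e})) (insert e T - {f}) f e"
proof -
  have S: "spanning_tree V E ends S" and T: "spanning_tree V E ends T" and dj: "S \<inter> T = {}"
    and un: "S \<union> T = E" using P unfolding tau_vertices_def by auto
  have eS: "e \<in> S" and fT: "f \<in> T" and I: "fund_cut E ends S e \<inter> fund_cycle ends T e = {e, f}"
    using X unfolding unique_S_exchange_def by auto
  have fE: "f \<in> E" and eE: "e \<in> E" using un eS fT by auto
  have fS: "f \<notin> S" and eT: "e \<notin> T" using dj eS fT by auto
  have ef: "e \<noteq> f" using fS eS by auto
  have fD: "f \<in> fund_cut E ends S e" and fC: "f \<in> fund_cycle ends T e" using I by auto
  have "card (ends e) = 2" using mg eE by blast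
  then obtain u w where uw: "ends e = {u,w}" by (meson card_2_iff)
  have uV: "u \<in> V" and wV: "w \<in> V" using mg eE uw by auto
  have C: "fund_cycle ends T e = insert e {g\<in>T. (u,w) \<notin> reach ends (T - {g})}"
    using tree_cycle_char[OF T mg uw uV wV eT] .
  have nr: "(u,w) \<notin> reach ends (T - {f})" using fC C ef by auto
  have S2: "spanning_tree V E ends (insert f (S - {e}))" using exch_S[OF S mg eS fE fS fD] .
  have T2': "spanning_tree V E ends (insert e (T - {f}))" using exch_T[OF T mg eE eT fT uw nr] .
  have eqT: "insert e T - {f} = insert e (T - {f})" using ef by auto
  have dj2: "insert f (S - {e}) \<inter> (insert e T - {f}) = {}" using dj ef fS eT by auto
  have un2: "insert f (S - {e}) \<union> (insert e T - {f}) = E" using un eS fT ef by auto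
  have tau: "(insert f (S - {e}), insert e T - {f}) \<in> tau_vertices V E ends"
  proof -
    have "spanning_tree V E ends (insert e T - {f})" using T2' eqT by simp
    then show ?thesis unfolding tau_vertices_def using S2 dj2 un2 by blast
  qed
  have c1: "fund_cycle ends (insert e T - {f}) f = fund_cycle ends T e"
  proof -
    have "insert f (insert e T - {f}) = insert e T" using fT by auto
    then show ?thesis unfolding fund_cycle_def by simp
  qed
  have "insert f (S - {e}) - {f} = S - {e}" using fS by auto
  then have c2: "fund_cut E ends (insert f (S - {e})) f = fund_cut E ends S e"
    by (rule cut_swap[OF fD])
  have "unique_S_exchange E ends (insert f (S - {e})) (insert e T - {f}) f e"
    unfolding unique_S_exchange_def c1 c2 I using ef by auto
  with tau show ?thesis by blast
qed

lemma reach_same: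
  assumes "\<forall>g\<in>F. ends1 g = ends2 g"
  shows "reach ends1 F = reach ends2 F"
proof -
  have "adj_rel ends1 F = adj_rel ends2 F" using assms unfolding adj_rel_def by force
  then show ?thesis by simp
qed

lemma reach_lift:
  assumes "\<forall>g\<in>F. \<forall>p q. ends1 g = {p,q} \<longrightarrow> (p,q) \<in> reach ends2 F2" "(x,y) \<in> reach ends1 F"
  shows "(x,y) \<in> reach ends2 F2"
  using reach_hom[of F ends1 id ends2 F2 x y] assms by simp

lemma pendant_proj:
  assumes nv: "\<forall>g\<in>F. v \<notin> ends g" and ee: "ends e = {v,c}" and r: "(x,y) \<in> reach ends (insert e F)"
  shows "((if x = v then c else x), (if y = v then c else y)) \<in> reach ends F"
proof (rule reach_hom[OF _ r])
  show "\<forall>g\<in>insert e F. \<forall>p q. ends g = {p,q} \<longrightarrow>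
    ((if p = v then c else p), (if q = v then c else q)) \<in> reach ends F"
  proof (intro ballI allI impI)
    fix g p q assume g: "g \<in> insert e F" "ends g = {p,q}"
    show "((if p = v then c else p), (if q = v then c else q)) \<in> reach ends F"
    proof (cases "g = e")
      case True
      then have "{p,q} = {v,c}" using g ee by simp
      then have "(p = v \<and> q = c) \<or> (p = c \<and> q = v)" by (auto simp: doubleton_eq_iff)
      then show ?thesis by auto
    next
      case False
      then have "g \<in> F" using g by simp
      then have "p \<noteq> v" "q \<noteq> v" using nv g by auto
      then show ?thesis using reach_edge[where ends=ends, OF \<open>g \<in> F\<close> g(2)] by simp
    qed
  qed
qed

lemma subdiv_proj:
  assumes nv: "\<forall>g\<in>F. v \<notin> ends g" and ea: "ends ea = {v,a}" and eb: "ends eb = {v,b}"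
    and ab: "(a,b) \<in> reach ends2 F2" and FF: "\<forall>g\<in>F. \<forall>p q. ends g = {p,q} \<longrightarrow> (p,q) \<in> reach ends2 F2"
    and r: "(x,y) \<in> reach ends (insert ea (insert eb F))"
  shows "((if x = v then a else x), (if y = v then a else y)) \<in> reach ends2 F2"
proof (rule reach_hom[OF _ r])
  show "\<forall>g\<in>insert ea (insert eb F). \<forall>p q. ends g = {p,q} \<longrightarrow>
    ((if p = v then a else p), (if q = v then a else q)) \<in> reach ends2 F2"
  proof (intro ballI allI impI)
    fix g p q assume g: "g \<in> insert ea (insert eb F)" "ends g = {p,q}"
    show "((if p = v then a else p), (if q = v then a else q)) \<in> reach ends2 F2"
    proof (cases "g = ea")
      case True
      then have "(p = v \<and> q = a) \<or> (p = a \<and> q = v)" using g ea by (auto simp: doubleton_eq_iff)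
      then show ?thesis by auto
    next
      case F1: False
      show ?thesis
      proof (cases "g = eb")
        case True
        then have "(p = v \<and> q = b) \<or> (p = b \<and> q = v)" using g eb by (auto simp: doubleton_eq_iff)
        moreover have "(b,a) \<in> reach ends2 F2" using reach_sym[OF ab] .
        moreover have "a \<noteq> v \<Longrightarrow> b \<noteq> v \<Longrightarrow> True" by simp
        ultimately show ?thesis using ab by (cases "b = v") auto
      next
        case False
        then have "g \<in> F" using g F1 by simp
        then have "p \<noteq> v" "q \<noteq> v" using nv g by auto
        then show ?thesis using FF \<open>g \<in> F\<close> g(2) by simp
      qed
    qed
  qed
qed

lemma core_half:
  fixes V :: "'v set" and E :: "'e set"
  assumes mg: "\<forall>g\<in>E. ends g \<subseteq> V \<and> card (ends g) = 2"
    and vV: "v \<in> V" and aV: "a \<in> V" and bV: "b \<in> V" and cV: "c \<in> V"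
    and dv: "a \<noteq> b" "a \<noteq> c" "b \<noteq> c" "a \<noteq> v" "b \<noteq> v" "c \<noteq> v"
    and de: "ea \<noteq> eb" "ea \<noteq> ec" "eb \<noteq> ec"
    and inE: "ea \<in> E" "eb \<in> E" "ec \<in> E"
    and ea: "ends ea = {v,a}" and eb: "ends eb = {v,b}" and ec: "ends ec = {v,c}"
    and nv: "\<forall>g\<in>E - {ea,eb,ec}. v \<notin> ends g"
    and eabE: "eab \<notin> E"
    and E'_def: "E' = E - {ea,eb,ec} \<union> {eab}" and ends'_def: "ends' = ends(eab := {a,b})"
    and V'_def: "V' = V - {v}"
    and P: "(S,T) \<in> tau_vertices V' E' ends'"
    and X: "unique_S_exchange E' ends' S T f eab"
    and ca: "(c,a) \<in> reach ends' (S - {f})"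
  shows "(insert ec S, T - {eab} \<union> {ea,eb}) \<in> tau_vertices V E ends
       \<and> unique_S_exchange E ends (insert ec S) (T - {eab} \<union> {ea,eb}) f eb"
proof -
  define E0 where "E0 = E - {ea,eb,ec}"
  have St: "spanning_tree V' E' ends' S" and Tt: "spanning_tree V' E' ends' T" and dj: "S \<inter> T = {}"
    and un: "S \<union> T = E'" using P unfolding tau_vertices_def by auto
  have fS: "f \<in> S" and eabT: "eab \<in> T"
    and I0: "fund_cut E' ends' S f \<inter> fund_cycle ends' T f = {f, eab}"
    using X unfolding unique_S_exchange_def by auto
  have eabS: "eab \<notin> S" using dj eabT by blast
  have SE0: "S \<subseteq> E0" using un eabS E'_def E0_def by blast
  have T0E0: "T - {eab} \<subseteq> E0" using un E'_def E0_def by blast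
  have same: "\<forall>g\<in>E0. ends' g = ends g" using eabE ends'_def E0_def by auto
  have E0E: "E0 \<subseteq> E" using E0_def by blast
  have nv0: "\<forall>g\<in>E0. v \<notin> ends g" using nv E0_def by blast
  have mg': "\<forall>g\<in>E'. ends' g \<subseteq> V' \<and> card (ends' g) = 2"
  proof
    fix g assume g: "g \<in> E'"
    show "ends' g \<subseteq> V' \<and> card (ends' g) = 2"
    proof (cases "g = eab")
      case True then show ?thesis using ends'_def V'_def aV bV dv by auto
    next
      case False
      then have "g \<in> E0" using g E'_def E0_def by blast
      then show ?thesis using same mg nv0 E0E V'_def by auto
    qed
  qed
  have acS: "acyc ends' S" using tree_acyc[OF St mg'] .
  have acT: "acyc ends' T" using tree_acyc[OF Tt mg'] .
  have fE0: "f \<in> E0" using fS SE0 by blast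
  obtain u w where uw: "ends f = {u,w}" and uwne: "u \<noteq> w"
    using mg fE0 E0E by (metis card_2_iff subsetD)
  have uV: "u \<in> V" and wV: "w \<in> V" using mg fE0 E0E uw by auto
  have uv: "u \<noteq> v" and wv: "w \<noteq> v" using nv0 fE0 uw by auto
  have uw': "ends' f = {u,w}" using same fE0 uw by simp
  have uV': "u \<in> V'" and wV': "w \<in> V'" using uV wV uv wv V'_def by auto
  have rsS: "reach ends' F = reach ends F" if "F \<subseteq> S" for F
  proof -
    have "\<forall>g\<in>F. ends' g = ends g" using same SE0 that by blast
    then show ?thesis by (rule reach_same)
  qed
  have rsT0: "reach ends' F = reach ends F" if "F \<subseteq> T - {eab}" for F
  proof -
    have "\<forall>g\<in>F. ends' g = ends g" using same T0E0 that by blast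
    then show ?thesis by (rule reach_same)
  qed
  define S1 where "S1 = insert ec S"
  define T0 where "T0 = T - {eab}"
  define T1 where "T1 = T0 \<union> {ea,eb}"
  have eaS: "ea \<notin> S" "eb \<notin> S" "ec \<notin> S" using SE0 E0_def by auto
  have eaT0: "ea \<notin> T0" "eb \<notin> T0" "ec \<notin> T0" using T0E0 E0_def T0_def by auto
  have fT: "f \<notin> T" using dj fS by blast
  have S1t: "spanning_tree V E ends S1"
  proof (rule acyc_tree[OF _ mg])
    show "S1 \<subseteq> E" using SE0 E0E inE S1_def by blast
    show "V \<noteq> {}" using vV by blast
    have toc: "(c,x) \<in> reach ends S1" if "x \<in> V" for x
    proof (cases "x = v")
      case True then show ?thesis using reach_edge[of ec S1 ends c v] ec S1_def by (simp add: insert_commute)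
    next
      case False
      have "c \<in> V'" "x \<in> V'" using cV that V'_def dv False by auto
      then have "(c,x) \<in> reach ends' S" using tree_reach[OF St] by blast
      then have r: "(c,x) \<in> reach ends S" using rsS[of S] by simp
      have "S \<subseteq> S1" using S1_def by blast
      then show ?thesis using reach_mono r by metis
    qed
    show "\<forall>x\<in>V. \<forall>y\<in>V. (x,y) \<in> reach ends S1" by (rule conn_via[OF reach_sym[OF toc]])
    show "acyc ends S1" unfolding acyc_def
    proof (intro ballI allI impI notI)
      fix g p q assume g: "g \<in> S1" "ends g = {p,q}" "(p,q) \<in> reach ends (S1 - {g})"
      show False
      proof (cases "g = ec")
        case True
        then have "S1 - {g} = S" using S1_def eaS by auto
        then have r: "(p,q) \<in> reach ends S" using g by simp
        have nvS: "\<forall>g\<in>S. v \<notin> ends g" using nv0 SE0 by blast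
        have "(p = v \<and> q = c) \<or> (p = c \<and> q = v)" using g(2) True ec by (auto simp: doubleton_eq_iff)
        then show False
        proof
          assume "p = v \<and> q = c"
          then have "(v,c) \<in> reach ends S" using r by simp
          then show False using reach_isolated[OF nvS] dv by blast
        next
          assume "p = c \<and> q = v"
          then have "(v,c) \<in> reach ends S" using reach_sym[OF r] by simp
          then show False using reach_isolated[OF nvS] dv by blast
        qed
      next
        case False
        then have gS: "g \<in> S" using g S1_def by simp
        have "S1 - {g} = insert ec (S - {g})" using S1_def False by auto
        then have r: "(p,q) \<in> reach ends (insert ec (S - {g}))" using g by simp
        have nvS: "\<forall>h\<in>S - {g}. v \<notin> ends h" using nv0 SE0 by blast
        have "p \<noteq> v" "q \<noteq> v" using nv0 SE0 gS g(2) by auto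
        then have "(p,q) \<in> reach ends (S - {g})" using pendant_proj[OF nvS ec r] by simp
        then have "(p,q) \<in> reach ends' (S - {g})" using rsS[of "S - {g}"] by auto
        moreover have "ends' g = {p,q}" using same SE0 gS g(2) by auto
        ultimately show False using acycD[OF acS gS] by blast
      qed
    qed
  qed
  have abT1: "(a,b) \<in> reach ends T1"
  proof -
    have "(a,v) \<in> reach ends T1" using reach_edge[of ea T1 ends a v] ea T1_def by (simp add: insert_commute)
    moreover have "(v,b) \<in> reach ends T1" using reach_edge[of eb T1 ends v b] eb T1_def by simp
    ultimately show ?thesis by (rule rtrancl_trans)
  qed
  have liftT: "(x,y) \<in> reach ends T1" if "(x,y) \<in> reach ends' T" for x y
  proof (rule reach_lift[OF _ that], intro ballI allI impI)
    fix g p q assume g: "g \<in> T" "ends' g = {p,q}"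
    show "(p,q) \<in> reach ends T1"
    proof (cases "g = eab")
      case True
      then have "(p = a \<and> q = b) \<or> (p = b \<and> q = a)" using g ends'_def by (auto simp: doubleton_eq_iff)
      then show ?thesis using abT1 reach_sym[OF abT1] by auto
    next
      case False
      then have gg: "g \<in> T1" "ends g = {p,q}" using g same T0E0 T1_def T0_def by auto
      then show ?thesis using reach_edge[where ends=ends, OF gg] by simp
    qed
  qed
  have projb: "((if x = v then b else x), (if y = v then b else y)) \<in> reach ends' T0"
    if "(x,y) \<in> reach ends (insert eb T0)" for x y
  proof -
    have "\<forall>g\<in>T0. v \<notin> ends g" using nv0 T0E0 T0_def by blast
    from pendant_proj[OF this eb that] show ?thesis using rsT0[of T0] T0_def by simp
  qed
  have proja: "((if x = v then a else x), (if y = v then a else y)) \<in> reach ends' T0"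
    if "(x,y) \<in> reach ends (insert ea T0)" for x y
  proof -
    have "\<forall>g\<in>T0. v \<notin> ends g" using nv0 T0E0 T0_def by blast
    from pendant_proj[OF this ea that] show ?thesis using rsT0[of T0] T0_def by simp
  qed
  have "ends' eab = {a,b}" using ends'_def by simp
  then have abT0: "(a,b) \<notin> reach ends' T0"
    using acycD[OF acT eabT] T0_def by simp
  have T1t: "spanning_tree V E ends T1"
  proof (rule acyc_tree[OF _ mg])
    show "T1 \<subseteq> E" using T0E0 E0E inE T1_def T0_def by blast
    show "V \<noteq> {}" using vV by blast
    have toa: "(a,x) \<in> reach ends T1" if "x \<in> V" for x
    proof (cases "x = v")
      case True then show ?thesis using reach_edge[of ea T1 ends a v] ea T1_def by (simp add: insert_commute)
    next
      case False
      have "a \<in> V'" "x \<in> V'" using aV that V'_def dv False by auto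
      then have "(a,x) \<in> reach ends' T" using tree_reach[OF Tt] by blast
      then show ?thesis using liftT by blast
    qed
    show "\<forall>x\<in>V. \<forall>y\<in>V. (x,y) \<in> reach ends T1" by (rule conn_via[OF reach_sym[OF toa]])
    show "acyc ends T1" unfolding acyc_def
    proof (intro ballI allI impI notI)
      fix g p q assume g: "g \<in> T1" "ends g = {p,q}" "(p,q) \<in> reach ends (T1 - {g})"
      consider "g = ea" | "g = eb" | "g \<in> T0" "g \<noteq> ea" "g \<noteq> eb" using g T1_def by blast
      then show False
      proof cases
        case 1
        then have "T1 - {g} = insert eb T0" using T1_def eaT0 de by auto
        then have r: "(p,q) \<in> reach ends (insert eb T0)" using g by simp
        have "(p = v \<and> q = a) \<or> (p = a \<and> q = v)" using g(2) 1 ea by (auto simp: doubleton_eq_iff)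
        then show False
        proof
          assume "p = v \<and> q = a" then show False using projb[OF r] abT0 reach_sym dv by fastforce
        next
          assume "p = a \<and> q = v" then show False using projb[OF r] abT0 dv by fastforce
        qed
      next
        case 2
        then have "T1 - {g} = insert ea T0" using T1_def eaT0 de by auto
        then have r: "(p,q) \<in> reach ends (insert ea T0)" using g by simp
        have "(p = v \<and> q = b) \<or> (p = b \<and> q = v)" using g(2) 2 eb by (auto simp: doubleton_eq_iff)
        then show False
        proof
          assume "p = v \<and> q = b" then show False using proja[OF r] abT0 dv by fastforce
        next
          assume "p = b \<and> q = v" then show False using proja[OF r] abT0 reach_sym dv by fastforce
        qed
      next
        case 3
        have eq: "T1 - {g} = insert ea (insert eb (T0 - {g}))" using T1_def 3 by auto
        have nvF: "\<forall>h\<in>T0 - {g}. v \<notin> ends h" using nv0 T0E0 T0_def by blast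
        have ab2: "(a,b) \<in> reach ends' (T - {g})"
          using reach_edge[of eab "T - {g}" ends' a b] eabT 3 T0_def ends'_def by auto
        have FF: "\<forall>h\<in>T0 - {g}. \<forall>p q. ends h = {p,q} \<longrightarrow> (p,q) \<in> reach ends' (T - {g})"
        proof (intro ballI allI impI)
          fix h p q assume h: "h \<in> T0 - {g}" "ends h = {p,q}"
          then have hh: "h \<in> T - {g}" "ends' h = {p,q}" using same T0E0 T0_def by auto
          then show "(p,q) \<in> reach ends' (T - {g})" using reach_edge[where ends=ends', OF hh] by simp
        qed
        have r: "(p,q) \<in> reach ends (insert ea (insert eb (T0 - {g})))" using g eq by simp
        have "p \<noteq> v" "q \<noteq> v" using nv0 T0E0 3 g(2) T0_def by auto
        then have "(p,q) \<in> reach ends' (T - {g})" using subdiv_proj[OF nvF ea eb ab2 FF r] by simp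
        moreover have "ends' g = {p,q}" using same T0E0 3 g(2) T0_def by auto
        moreover have "g \<in> T" using 3 T0_def by blast
        ultimately show False using acycD[OF acT] by blast
      qed
    qed
  qed
  have dj1: "S1 \<inter> T1 = {}" unfolding S1_def T1_def using dj eaS eaT0 de T0_def by blast
  have eabE0: "eab \<notin> E0" using eabE E0E by blast
  have "S \<union> T = E0 \<union> {eab}" using un E'_def E0_def by simp
  then have ST0: "S \<union> T0 = E0" using eabS eabE0 T0_def by blast
  have "E = E0 \<union> {ea,eb,ec}" using inE E0_def by blast
  then have un1: "S1 \<union> T1 = E" unfolding S1_def T1_def using ST0 by blast
  have tau: "(S1, T1) \<in> tau_vertices V E ends"
    unfolding tau_vertices_def using S1t T1t dj1 un1 by blast
  have C0: "fund_cycle ends' T f = insert f {g\<in>T. (u,w) \<notin> reach ends' (T - {g})}"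
    using tree_cycle_char[OF Tt mg' uw' uV' wV' fT] .
  have fT1: "f \<notin> T1" using fT fE0 E0_def T1_def T0_def by auto
  have C1: "fund_cycle ends T1 f = insert f {g\<in>T1. (u,w) \<notin> reach ends (T1 - {g})}"
    using tree_cycle_char[OF T1t mg uw uV wV fT1] .
  have ebC1: "eb \<in> fund_cycle ends T1 f"
  proof -
    have "T1 - {eb} = insert ea T0" using T1_def eaT0 de by auto
    have "(u,w) \<notin> reach ends (T1 - {eb})"
    proof
      assume "(u,w) \<in> reach ends (T1 - {eb})"
      then have "(u,w) \<in> reach ends (insert ea T0)" using \<open>T1 - {eb} = insert ea T0\<close> by simp
      from proja[OF this] have r1: "(u,w) \<in> reach ends' T0" using uv wv by simp
      have ne: "eab \<noteq> f" using fS eabS by blast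
      have "eab \<in> fund_cycle ends' T f" using I0 by blast
      then have "(u,w) \<notin> reach ends' (T - {eab})" using ne unfolding C0 by blast
      then show False using r1 T0_def by simp
    qed
    then show ?thesis using C1 T1_def by auto
  qed
  let ?R = "reach ends (insert ec (S - {f}))"
  let ?R' = "reach ends' (S - {f})"
  have S1f: "S1 - {f} = insert ec (S - {f})" using S1_def de fE0 E0_def by auto
  have R'R: "(x,y) \<in> ?R" if "(x,y) \<in> ?R'" for x y
  proof -
    have "(x,y) \<in> reach ends (S - {f})" using that rsS[of "S - {f}"] by auto
    moreover have "S - {f} \<subseteq> insert ec (S - {f})" by blast
    ultimately show ?thesis using reach_mono by metis
  qed
  have RR': "(x,y) \<in> ?R \<Longrightarrow> ((if x = v then c else x), (if y = v then c else y)) \<in> ?R'" for x y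
  proof -
    assume r: "(x,y) \<in> ?R"
    have "\<forall>g\<in>S - {f}. v \<notin> ends g" using nv0 SE0 by blast
    from pendant_proj[OF this ec r] show ?thesis using rsS[of "S - {f}"] by auto
  qed
  have nuw: "(u,w) \<notin> ?R'" using acycD[OF acS fS uw'] .
  have D1: "fund_cut E ends S1 f = {h\<in>E. \<exists>u' w' p q. ends f = {u',w'} \<and> ends h = {p,q}
      \<and> (p,u') \<in> ?R \<and> (q,w') \<in> ?R}" unfolding fund_cut_def S1f by simp
  have eabD0: "eab \<in> fund_cut E' ends' S f" using I0 by blast
  then obtain u' w' p q where D0: "ends' f = {u',w'}" "ends' eab = {p,q}" "(p,u') \<in> ?R'" "(q,w') \<in> ?R'"
    unfolding fund_cut_def by blast
  have u'w': "(u' = u \<and> w' = w) \<or> (u' = w \<and> w' = u)" using D0(1) uw' by (auto simp: doubleton_eq_iff)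
  have pq: "(p = a \<and> q = b) \<or> (p = b \<and> q = a)" using D0(2) ends'_def by (auto simp: doubleton_eq_iff)
  have vc: "(v,c) \<in> ?R" using reach_edge[of ec "insert ec (S - {f})" ends v c] ec by simp
  have ebD1: "eb \<in> fund_cut E ends S1 f"
  proof -
    have "\<exists>u' w' p q. ends f = {u',w'} \<and> ends eb = {p,q} \<and> (p,u') \<in> ?R \<and> (q,w') \<in> ?R"
    proof (cases "p = a")
      case True
      then have qb: "q = b" using pq dv by auto
      have "(a,u') \<in> ?R'" using D0(3) True by simp
      then have "(v,u') \<in> ?R" using rtrancl_trans[OF rtrancl_trans[OF vc R'R[OF ca]] R'R] by blast
      moreover have "(b,w') \<in> ?R" using R'R[OF D0(4)] qb by simp
      moreover have "ends f = {u',w'}" using D0(1) uw' uw by auto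
      ultimately show ?thesis using eb by blast
    next
      case False
      then have pb: "p = b" and qa: "q = a" using pq by auto
      have "(a,w') \<in> ?R'" using D0(4) qa by simp
      then have "(v,w') \<in> ?R" using rtrancl_trans[OF rtrancl_trans[OF vc R'R[OF ca]] R'R] by blast
      moreover have "(b,u') \<in> ?R" using R'R[OF D0(3)] pb by simp
      moreover have "ends f = {w',u'}" using D0(1) uw' uw by auto
      ultimately show ?thesis using eb by blast
    qed
    then show ?thesis using D1 inE by blast
  qed
  have fD1: "f \<in> fund_cut E ends S1 f" using D1 uw fE0 E0E by blast
  have fC1: "f \<in> fund_cycle ends T1 f" using C1 by simp
  have sub: "fund_cut E ends S1 f \<inter> fund_cycle ends T1 f \<subseteq> {f, eb}"
  proof
    fix h assume h: "h \<in> fund_cut E ends S1 f \<inter> fund_cycle ends T1 f"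
    then have hD1: "h \<in> fund_cut E ends S1 f" by blast
    then have "\<exists>u2 w2 p2 q2. ends f = {u2,w2} \<and> ends h = {p2,q2} \<and> (p2,u2) \<in> ?R \<and> (q2,w2) \<in> ?R"
      unfolding D1 by simp
    then obtain u2 w2 p2 q2 where hD: "ends f = {u2,w2}" "ends h = {p2,q2}" "(p2,u2) \<in> ?R" "(q2,w2) \<in> ?R"
      by blast
    have u2w2: "(u2 = u \<and> w2 = w) \<or> (u2 = w \<and> w2 = u)" using hD(1) uw by (auto simp: doubleton_eq_iff)
    then have u2v: "u2 \<noteq> v" "w2 \<noteq> v" using uv wv by auto
    have "h \<in> fund_cycle ends T1 f" using h by blast
    then have hC: "h = f \<or> (h \<in> T1 \<and> (u,w) \<notin> reach ends (T1 - {h}))" unfolding C1 by simp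
    show "h \<in> {f, eb}"
    proof (rule ccontr)
      assume hn: "h \<notin> {f, eb}"
      then have hT1: "h \<in> T1" and nr: "(u,w) \<notin> reach ends (T1 - {h})" using hC by auto
      consider "h = ea" | "h \<in> T0" "h \<noteq> ea" "h \<noteq> eb" using hT1 hn T1_def by blast
      then show False
      proof cases
        case 1
        then have "(p2 = v \<and> q2 = a) \<or> (p2 = a \<and> q2 = v)" using hD(2) ea by (auto simp: doubleton_eq_iff)
        then have "((c,u2) \<in> ?R' \<and> (a,w2) \<in> ?R') \<or> ((a,u2) \<in> ?R' \<and> (c,w2) \<in> ?R')"
          using RR'[OF hD(3)] RR'[OF hD(4)] u2v dv by auto
        then have "(u2,w2) \<in> ?R'"
        proof
          assume h: "(c,u2) \<in> ?R' \<and> (a,w2) \<in> ?R'"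
          show ?thesis using rtrancl_trans[OF rtrancl_trans[OF reach_sym[of c u2] ca]] h by blast
        next
          assume h: "(a,u2) \<in> ?R' \<and> (c,w2) \<in> ?R'"
          show ?thesis using rtrancl_trans[OF rtrancl_trans[OF reach_sym[of a u2] reach_sym[OF ca]]] h by blast
        qed
        then show False using u2w2 nuw reach_sym[of u2 w2] by blast
      next
        case 2
        have hT: "h \<in> T" and heab: "h \<noteq> eab" using 2 T0_def by auto
        have hE0: "h \<in> E0" using 2 T0E0 T0_def by blast
        have "p2 \<noteq> v" "q2 \<noteq> v" using nv0 hE0 hD(2) by auto
        then have "(p2,u2) \<in> ?R'" "(q2,w2) \<in> ?R'" using RR'[OF hD(3)] RR'[OF hD(4)] u2v by auto
        moreover have "ends' h = {p2,q2}" "ends' f = {u2,w2}" using same hE0 fE0 hD by auto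
        moreover have "h \<in> E'" using hT un by blast
        ultimately have hD0: "h \<in> fund_cut E' ends' S f" unfolding fund_cut_def by blast
        have "(u,w) \<notin> reach ends' (T - {h})"
        proof
          assume r: "(u,w) \<in> reach ends' (T - {h})"
          have "(u,w) \<in> reach ends (T1 - {h})"
          proof (rule reach_lift[OF _ r], intro ballI allI impI)
            fix g p q assume g: "g \<in> T - {h}" "ends' g = {p,q}"
            show "(p,q) \<in> reach ends (T1 - {h})"
            proof (cases "g = eab")
              case True
              then have pq: "(p = a \<and> q = b) \<or> (p = b \<and> q = a)" using g ends'_def by (auto simp: doubleton_eq_iff)
              have "(a,v) \<in> reach ends (T1 - {h})" using reach_edge[of ea "T1 - {h}" ends a v] ea T1_def 2
                by (simp add: insert_commute)
              moreover have "(v,b) \<in> reach ends (T1 - {h})" using reach_edge[of eb "T1 - {h}" ends v b] eb T1_def 2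
                by simp
              ultimately have "(a,b) \<in> reach ends (T1 - {h})" by (rule rtrancl_trans)
              then show ?thesis using pq reach_sym[of a b] by blast
            next
              case False
              then have gg: "g \<in> T1 - {h}" "ends g = {p,q}" using g same T0E0 T1_def T0_def by auto
              then show ?thesis using reach_edge[where ends=ends, OF gg] by simp
            qed
          qed
          then show False using nr by simp
        qed
        then have "h \<in> fund_cycle ends' T f" using C0 hT by blast
        then have "h \<in> {f, eab}" using I0 hD0 by blast
        then show False using heab hT fT by auto
      qed
    qed
  qed
  have "fund_cut E ends S1 f \<inter> fund_cycle ends T1 f = {f, eb}"
    using sub fD1 fC1 ebD1 ebC1 by blast
  then have "unique_S_exchange E ends S1 T1 f eb"
    unfolding unique_S_exchange_def using fS S1_def T1_def by auto
  with tau show ?thesis unfolding S1_def T1_def T0_def by blast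
qed

lemma side:
  assumes St: "spanning_tree V' E' ends' S" and fS: "f \<in> S" and uw: "ends' f = {u,w}"
    and D: "eab \<in> fund_cut E' ends' S f" and eab: "ends' eab = {a,b}" and cV: "c \<in> V'" and uV: "u \<in> V'"
  shows "(c,a) \<in> reach ends' (S - {f}) \<or> (c,b) \<in> reach ends' (S - {f})"
proof -
  let ?R = "reach ends' (S - {f})"
  obtain u' w' p q where D0: "ends' f = {u',w'}" "ends' eab = {p,q}" "(p,u') \<in> ?R" "(q,w') \<in> ?R"
    using D unfolding fund_cut_def by blast
  have r: "(u,c) \<in> reach ends' S" using tree_reach[OF St uV cV] .
  have cpq: "(c,p) \<in> ?R \<or> (c,q) \<in> ?R"
    using reach_split[OF r fS uw]
  proof (elim disjE)
    assume h: "(u,c) \<in> ?R"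
    have "u = u' \<or> u = w'" using D0(1) uw by (auto simp: doubleton_eq_iff)
    then show ?thesis
    proof
      assume hu: "u = u'"
      then have "(c,u') \<in> ?R" using reach_sym[OF h] by simp
      then show ?thesis using rtrancl_trans[OF _ reach_sym[OF D0(3)]] by blast
    next
      assume hu: "u = w'"
      then have "(c,w') \<in> ?R" using reach_sym[OF h] by simp
      then show ?thesis using rtrancl_trans[OF _ reach_sym[OF D0(4)]] by blast
    qed
  next
    assume h: "(w,c) \<in> ?R"
    have "w = u' \<or> w = w'" using D0(1) uw by (auto simp: doubleton_eq_iff)
    then show ?thesis
    proof
      assume hu: "w = u'"
      then have "(c,u') \<in> ?R" using reach_sym[OF h] by simp
      then show ?thesis using rtrancl_trans[OF _ reach_sym[OF D0(3)]] by blast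
    next
      assume hu: "w = w'"
      then have "(c,w') \<in> ?R" using reach_sym[OF h] by simp
      then show ?thesis using rtrancl_trans[OF _ reach_sym[OF D0(4)]] by blast
    qed
  qed
  have "(p = a \<and> q = b) \<or> (p = b \<and> q = a)" using D0(2) eab by (auto simp: doubleton_eq_iff)
  then show ?thesis using cpq by auto
qed

lemma core:
  fixes V :: "'v set" and E :: "'e set"
  assumes mg: "\<forall>g\<in>E. ends g \<subseteq> V \<and> card (ends g) = 2"
    and vV: "v \<in> V" and aV: "a \<in> V" and bV: "b \<in> V" and cV: "c \<in> V"
    and dv: "a \<noteq> b" "a \<noteq> c" "b \<noteq> c" "a \<noteq> v" "b \<noteq> v" "c \<noteq> v"
    and de: "ea \<noteq> eb" "ea \<noteq> ec" "eb \<noteq> ec"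
    and inE: "ea \<in> E" "eb \<in> E" "ec \<in> E"
    and ea: "ends ea = {v,a}" and eb: "ends eb = {v,b}" and ec: "ends ec = {v,c}"
    and nv: "\<forall>g\<in>E - {ea,eb,ec}. v \<notin> ends g"
    and eabE: "eab \<notin> E"
    and P: "(S,T) \<in> tau_vertices (V - {v}) (E - {ea,eb,ec} \<union> {eab}) (ends(eab := {a,b}))"
    and X: "unique_S_exchange (E - {ea,eb,ec} \<union> {eab}) (ends(eab := {a,b})) S T f eab"
  shows "\<exists>e2\<in>{ea,eb}. (insert ec S, T - {eab} \<union> {ea,eb}) \<in> tau_vertices V E ends
       \<and> unique_S_exchange E ends (insert ec S) (T - {eab} \<union> {ea,eb}) f e2
       \<and> (insert e2 (insert ec S - {f}), insert f (T - {eab} \<union> {ea,eb}) - {e2}) \<in> tau_vertices V E ends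
       \<and> unique_S_exchange E ends (insert e2 (insert ec S - {f})) (insert f (T - {eab} \<union> {ea,eb}) - {e2}) e2 f"
proof -
  let ?E' = "E - {ea,eb,ec} \<union> {eab}"
  let ?e' = "ends(eab := {a,b})"
  let ?V' = "V - {v}"
  have St: "spanning_tree ?V' ?E' ?e' S" and dj: "S \<inter> T = {}" and un: "S \<union> T = ?E'"
    using P unfolding tau_vertices_def by auto
  have fS: "f \<in> S" and eabT: "eab \<in> T"
    and I0: "fund_cut ?E' ?e' S f \<inter> fund_cycle ?e' T f = {f, eab}"
    using X unfolding unique_S_exchange_def by auto
  have fne: "f \<noteq> eab" using fS eabT dj by blast
  have fE0: "f \<in> E - {ea,eb,ec}" using fS un fne by blast
  have "card (ends f) = 2" using mg fE0 by blast
  then obtain u w where uw: "ends f = {u,w}" by (meson card_2_iff)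
  have uV': "u \<in> ?V'" using mg fE0 uw nv by auto
  have uw': "?e' f = {u,w}" using uw fne by simp
  have D: "eab \<in> fund_cut ?E' ?e' S f" using I0 by blast
  have cV': "c \<in> ?V'" using cV dv by auto
  have sd: "(c,a) \<in> reach ?e' (S - {f}) \<or> (c,b) \<in> reach ?e' (S - {f})"
    by (rule side[OF St fS uw' D _ cV' uV']) simp
  let ?S1 = "insert ec S"
  let ?T1 = "T - {eab} \<union> {ea,eb}"
  have "\<exists>e2\<in>{ea,eb}. (?S1, ?T1) \<in> tau_vertices V E ends \<and> unique_S_exchange E ends ?S1 ?T1 f e2"
    using sd
  proof
    assume ca: "(c,a) \<in> reach ?e' (S - {f})"
    have "(?S1, ?T1) \<in> tau_vertices V E ends \<and> unique_S_exchange E ends ?S1 ?T1 f eb"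
      by (rule core_half[OF mg vV aV bV cV dv de inE ea eb ec nv eabE refl refl refl P X ca])
    then show ?thesis by blast
  next
    assume cb: "(c,b) \<in> reach ?e' (S - {f})"
    have e1: "E - {ea,eb,ec} \<union> {eab} = E - {eb,ea,ec} \<union> {eab}" by (simp add: insert_commute)
    have e2: "ends(eab := {a,b}) = ends(eab := {b,a})" by (simp add: insert_commute)
    have e3: "T - {eab} \<union> {ea,eb} = T - {eab} \<union> {eb,ea}" by (simp add: insert_commute)
    have nv': "\<forall>g\<in>E - {eb,ea,ec}. v \<notin> ends g" using nv by (simp add: insert_commute)
    have "(?S1, T - {eab} \<union> {eb,ea}) \<in> tau_vertices V E ends \<and> unique_S_exchange E ends ?S1 (T - {eab} \<union> {eb,ea}) f ea"
      by (rule core_half[OF mg vV bV aV cV dv(1)[symmetric] dv(3) dv(2) dv(5) dv(4) dv(6)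
            de(1)[symmetric] de(3) de(2) inE(2) inE(1) inE(3) eb ea ec nv' eabE e1 e2 refl P X cb])
    then show ?thesis using e3 by auto
  qed
  then obtain e2 where e2: "e2 \<in> {ea,eb}" "(?S1, ?T1) \<in> tau_vertices V E ends" "unique_S_exchange E ends ?S1 ?T1 f e2"
    by blast
  from rev_S[OF mg e2(2) e2(3)] e2 show ?thesis by blast
qed

lemma tau_sym: "(S,T) \<in> tau_vertices V E ends \<Longrightarrow> (T,S) \<in> tau_vertices V E ends"
  unfolding tau_vertices_def by auto

lemma uT_uS: "unique_T_exchange E ends S T e f = unique_S_exchange E ends T S e f"
  unfolding unique_T_exchange_def unique_S_exchange_def by simp

theorem mainTheorem15:
  fixes V :: "'v set" and E :: "'e set" and ends :: "'e \<Rightarrow> 'v set"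
    and v x y z a b c :: 'v and ex ey ez ea eb ec eab f :: 'e and S T :: "'e set"
  assumes "mgraph V E ends" and "bispanning V E ends" and "atomic V E ends"
    and "v \<in> V"
    and "distinct [x, y, z]" and "distinct [ex, ey, ez]"
    and "{e \<in> E. v \<in> ends e} = {ex, ey, ez}"
    and "ends ex = {v, x}" and "ends ey = {v, y}" and "ends ez = {v, z}"
    and "(a, b, c, ea, eb, ec) \<in> {(x, y, z, ex, ey, ez), (x, z, y, ex, ez, ey), (y, z, x, ey, ez, ex)}"
    and "eab \<notin> E"
    and "tau3_arc (V - {v}) ((E - {ex, ey, ez}) \<union> {eab}) (ends(eab := {a, b})) f eab S T"
  shows "\<exists>e2 \<in> {ea, eb}.
           tau3_arc V E ends f e2 (fst (rho eab ea eb ec (S, T))) (snd (rho eab ea eb ec (S, T)))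
         \<and> tau3_arc V E ends e2 f
             (fst (arc_head f e2 (fst (rho eab ea eb ec (S, T))) (snd (rho eab ea eb ec (S, T)))))
             (snd (arc_head f e2 (fst (rho eab ea eb ec (S, T))) (snd (rho eab ea eb ec (S, T)))))"
proof -
  note A = assms
  have mg: "\<forall>g\<in>E. ends g \<subseteq> V \<and> card (ends g) = 2" using A(1) unfolding mgraph_def by blast
  have H: "distinct [a,b,c] \<and> distinct [ea,eb,ec] \<and> {ea,eb,ec} = {ex,ey,ez}
      \<and> ends ea = {v,a} \<and> ends eb = {v,b} \<and> ends ec = {v,c}"
    using A(5,6,8,9,10,11) by (auto simp: insert_commute)
  have dv0: "a \<noteq> b" "a \<noteq> c" "b \<noteq> c" and de: "ea \<noteq> eb" "ea \<noteq> ec" "eb \<noteq> ec"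
    and setE: "{ea,eb,ec} = {ex,ey,ez}" and ea: "ends ea = {v,a}" and eb: "ends eb = {v,b}"
    and ec: "ends ec = {v,c}" using H by auto
  have inE: "ea \<in> E" "eb \<in> E" "ec \<in> E" using A(7) setE by blast+
  have "card {v,a} = 2" "card {v,b} = 2" "card {v,c} = 2" using mg inE ea eb ec by auto
  then have dv1: "a \<noteq> v" "b \<noteq> v" "c \<noteq> v" by auto
  have aV: "a \<in> V" and bV: "b \<in> V" and cV: "c \<in> V" using mg inE ea eb ec by auto
  have nv: "\<forall>g\<in>E - {ea,eb,ec}. v \<notin> ends g" using A(7) setE by blast
  have E'eq: "E - {ex,ey,ez} \<union> {eab} = E - {ea,eb,ec} \<union> {eab}" using setE by simp
  have arc: "tau3_arc (V - {v}) (E - {ea,eb,ec} \<union> {eab}) (ends(eab := {a, b})) f eab S T"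
    using A(13) E'eq by simp
  then have P: "(S,T) \<in> tau_vertices (V - {v}) (E - {ea,eb,ec} \<union> {eab}) (ends(eab := {a, b}))"
    and X: "unique_S_exchange (E - {ea,eb,ec} \<union> {eab}) (ends(eab := {a, b})) S T f eab
         \<or> unique_T_exchange (E - {ea,eb,ec} \<union> {eab}) (ends(eab := {a, b})) S T f eab"
    unfolding tau3_arc_def by auto
  have dj: "S \<inter> T = {}" and un: "S \<union> T = E - {ea,eb,ec} \<union> {eab}" using P unfolding tau_vertices_def by auto
  from X show ?thesis
  proof
    assume XS: "unique_S_exchange (E - {ea,eb,ec} \<union> {eab}) (ends(eab := {a, b})) S T f eab"
    have fS: "f \<in> S" and eabT: "eab \<in> T" using XS unfolding unique_S_exchange_def by auto
    have eabS: "eab \<notin> S" using dj eabT by blast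
    have rho: "rho eab ea eb ec (S, T) = (insert ec S, T - {eab} \<union> {ea,eb})"
      unfolding rho_def using eabS by simp
    obtain e2 where e2: "e2 \<in> {ea,eb}"
      "(insert ec S, T - {eab} \<union> {ea,eb}) \<in> tau_vertices V E ends"
      "unique_S_exchange E ends (insert ec S) (T - {eab} \<union> {ea,eb}) f e2"
      "(insert e2 (insert ec S - {f}), insert f (T - {eab} \<union> {ea,eb}) - {e2}) \<in> tau_vertices V E ends"
      "unique_S_exchange E ends (insert e2 (insert ec S - {f})) (insert f (T - {eab} \<union> {ea,eb}) - {e2}) e2 f"
      using core[OF mg A(4) aV bV cV dv0 dv1 de inE ea eb ec nv A(12) P XS] by blast
    have ah: "arc_head f e2 (insert ec S) (T - {eab} \<union> {ea,eb})
        = (insert e2 (insert ec S - {f}), insert f (T - {eab} \<union> {ea,eb}) - {e2})"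
      unfolding arc_head_def using fS by simp
    have g1: "tau3_arc V E ends f e2 (fst (rho eab ea eb ec (S, T))) (snd (rho eab ea eb ec (S, T)))"
      unfolding rho prod.sel tau3_arc_def using e2(2) e2(3) by blast
    have g2: "tau3_arc V E ends e2 f
             (fst (arc_head f e2 (fst (rho eab ea eb ec (S, T))) (snd (rho eab ea eb ec (S, T)))))
             (snd (arc_head f e2 (fst (rho eab ea eb ec (S, T))) (snd (rho eab ea eb ec (S, T)))))"
      unfolding rho prod.sel ah tau3_arc_def using e2(4) e2(5) by blast
    show ?thesis using e2(1) g1 g2 by blast
  next
    assume XT: "unique_T_exchange (E - {ea,eb,ec} \<union> {eab}) (ends(eab := {a, b})) S T f eab"
    then have XS: "unique_S_exchange (E - {ea,eb,ec} \<union> {eab}) (ends(eab := {a, b})) T S f eab"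
      using uT_uS by metis
    have fT: "f \<in> T" and eabS: "eab \<in> S" using XT unfolding unique_T_exchange_def by auto
    have P': "(T,S) \<in> tau_vertices (V - {v}) (E - {ea,eb,ec} \<union> {eab}) (ends(eab := {a, b}))"
      using tau_sym[OF P] .
    have rho: "rho eab ea eb ec (S, T) = (S - {eab} \<union> {ea,eb}, insert ec T)"
      unfolding rho_def using eabS by simp
    obtain e2 where e2: "e2 \<in> {ea,eb}"
      "(insert ec T, S - {eab} \<union> {ea,eb}) \<in> tau_vertices V E ends"
      "unique_S_exchange E ends (insert ec T) (S - {eab} \<union> {ea,eb}) f e2"
      "(insert e2 (insert ec T - {f}), insert f (S - {eab} \<union> {ea,eb}) - {e2}) \<in> tau_vertices V E ends"
      "unique_S_exchange E ends (insert e2 (insert ec T - {f})) (insert f (S - {eab} \<union> {ea,eb}) - {e2}) e2 f"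
      using core[OF mg A(4) aV bV cV dv0 dv1 de inE ea eb ec nv A(12) P' XS] by blast
    have fnS1: "f \<notin> S - {eab} \<union> {ea,eb}"
    proof -
      have "f \<notin> S" using dj fT by blast
      moreover have "f \<noteq> ea" "f \<noteq> eb" using fT un dj eabS by auto
      ultimately show ?thesis by blast
    qed
    have ah: "arc_head f e2 (S - {eab} \<union> {ea,eb}) (insert ec T)
        = (insert f (S - {eab} \<union> {ea,eb}) - {e2}, insert e2 (insert ec T - {f}))"
      unfolding arc_head_def if_not_P[OF fnS1] by (rule refl)
    have t1: "(S - {eab} \<union> {ea,eb}, insert ec T) \<in> tau_vertices V E ends" using tau_sym[OF e2(2)] .
    have t2: "(insert f (S - {eab} \<union> {ea,eb}) - {e2}, insert e2 (insert ec T - {f})) \<in> tau_vertices V E ends"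
      using tau_sym[OF e2(4)] .
    have u1: "unique_T_exchange E ends (S - {eab} \<union> {ea,eb}) (insert ec T) f e2" using e2(3) uT_uS by metis
    have u2: "unique_T_exchange E ends (insert f (S - {eab} \<union> {ea,eb}) - {e2}) (insert e2 (insert ec T - {f})) e2 f"
      using e2(5) uT_uS by metis
    have g1: "tau3_arc V E ends f e2 (fst (rho eab ea eb ec (S, T))) (snd (rho eab ea eb ec (S, T)))"
      unfolding rho prod.sel tau3_arc_def using t1 u1 by blast
    have g2: "tau3_arc V E ends e2 f
             (fst (arc_head f e2 (fst (rho eab ea eb ec (S, T))) (snd (rho eab ea eb ec (S, T)))))
             (snd (arc_head f e2 (fst (rho eab ea eb ec (S, T))) (snd (rho eab ea eb ec (S, T)))))"
      unfolding rho prod.sel ah tau3_arc_def using t2 u2 by blast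
    show ?thesis using e2(1) g1 g2 by blast
  qed
qed

end
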